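(* Let $L$ be a Latin array of order $n$. If $L$ has at least $(229n^2+27n)/256$ distinct symbols, then $L$ has a transversal.
   Context: An array of order $n$ is an $n\times n$ array with a symbol in each cell; an entry is a triple $(i,j,A_{ij})$. An array is Latin if no symbol appears more than once in any row or column. A transversal of an $n\times n$ array is a set of $n$ entries, no two of which agree in row, column, or symbol. *)

theory Defs
  imports Complex_Main
begin

text \<open>An array of order n: a function A :: nat => nat => 'a, where only the cells
(i,j) with i < n and j < n are relevant. An entry is a triple (i, j, A i j).\<close>

definition entries :: "nat \<Rightarrow> (nat \<Rightarrow> nat \<Rightarrow> 'a) \<Rightarrow> (nat \<times> nat \<times> 'a) set" where
  "entries n A = {(i, j, A i j) | i j. i < n \<and> j < n}"

definition symbols :: "nat \<Rightarrow> (nat \<Rightarrow> nat \<Rightarrow> 'a) \<Rightarrow> 'a set" where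
  "symbols n A = {A i j | i j. i < n \<and> j < n}"

definition latin :: "nat \<Rightarrow> (nat \<Rightarrow> nat \<Rightarrow> 'a) \<Rightarrow> bool" where
  "latin n A \<longleftrightarrow>
     (\<forall>i<n. \<forall>j<n. \<forall>k<n. j \<noteq> k \<longrightarrow> A i j \<noteq> A i k) \<and>
     (\<forall>j<n. \<forall>i<n. \<forall>k<n. i \<noteq> k \<longrightarrow> A i j \<noteq> A k j)"

definition is_transversal :: "nat \<Rightarrow> (nat \<Rightarrow> nat \<Rightarrow> 'a) \<Rightarrow> (nat \<times> nat \<times> 'a) set \<Rightarrow> bool" where
  "is_transversal n A T \<longleftrightarrow>
     T \<subseteq> entries n A \<and> card T = n \<and>
     (\<forall>e\<in>T. \<forall>f\<in>T. e \<noteq> f \<longrightarrow>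
        fst e \<noteq> fst f \<and> fst (snd e) \<noteq> fst (snd f) \<and> snd (snd e) \<noteq> snd (snd f))"

end

theory Submission
  imports Defs
begin


lemma hall:
  assumes "finite I" "\<forall>i\<in>I. finite (S i)" "\<forall>J\<subseteq>I. card J \<le> card (\<Union>(S ` J))"
  shows "\<exists>f. inj_on f I \<and> (\<forall>i\<in>I. f i \<in> S i)"
  using assms
proof (induction "card I" arbitrary: I S rule: less_induct)
  case less
  note fin = less.prems(1) and finS = less.prems(2) and H = less.prems(3)
  show ?case
  proof (cases "I = {}")
    case True then show ?thesis by auto
  next
    case False
    show ?thesis
    proof (cases "\<exists>J. J \<subseteq> I \<and> J \<noteq> {} \<and> J \<noteq> I \<and> card (\<Union>(S ` J)) = card J")
      case True
      then obtain J where J: "J \<subseteq> I" "J \<noteq> {}" "J \<noteq> I" "card (\<Union>(S ` J)) = card J" by blast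
      define U where "U = \<Union>(S ` J)"
      have finJ: "finite J" using J(1) fin finite_subset by blast
      have finU: "finite U" unfolding U_def using finJ finS J(1) by blast
      have lt1: "card J < card I" using J fin by (meson psubsetI psubset_card_mono)
      obtain f1 where f1: "inj_on f1 J" "\<forall>i\<in>J. f1 i \<in> S i"
      proof -
        have a: "\<forall>i\<in>J. finite (S i)" using finS J(1) by blast
        have b: "\<forall>K\<subseteq>J. card K \<le> card (\<Union>(S ` K))" using H J(1) by blast
        show ?thesis using less.hyps[OF lt1 finJ a b] that by blast
      qed
      define S' where "S' i = S i - U" for i
      have lt2: "card (I - J) < card I" using J fin
        proof -
        obtain j where "j \<in> J" using J(2) by blast
        then have "I - J \<subset> I" using J(1) by blast
        then show ?thesis using fin by (simp add: psubset_card_mono)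
      qed
      have H2: "\<forall>K\<subseteq>I - J. card K \<le> card (\<Union>(S' ` K))"
      proof (intro allI impI)
        fix K assume K: "K \<subseteq> I - J"
        have finK: "finite K" using K fin finite_subset by blast
        have eq: "\<Union>(S' ` K) = \<Union>(S ` (K \<union> J)) - U" unfolding S'_def U_def by auto
        have sub: "U \<subseteq> \<Union>(S ` (K \<union> J))" unfolding U_def by auto
        have finKJ: "finite (\<Union>(S ` (K \<union> J)))" using finK finJ finS K J(1) by blast
        have "card (\<Union>(S' ` K)) = card (\<Union>(S ` (K \<union> J))) - card U"
          using eq sub finKJ by (simp add: card_Diff_subset finite_subset)
        moreover have "card (K \<union> J) \<le> card (\<Union>(S ` (K \<union> J)))"
        proof -
          have "K \<union> J \<subseteq> I" using K J(1) by blast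
          then show ?thesis using H by blast
        qed
        moreover have "card (K \<union> J) = card K + card J" using K finK finJ
          by (subst card_Un_disjoint) auto
        moreover have "card U = card J" using J(4) U_def by simp
        ultimately show "card K \<le> card (\<Union>(S' ` K))" by linarith
      qed
      obtain f2 where f2: "inj_on f2 (I - J)" "\<forall>i\<in>I - J. f2 i \<in> S' i"
        using less.hyps[OF lt2, of S'] fin finS H2 unfolding S'_def by auto
      define f where "f i = (if i \<in> J then f1 i else f2 i)" for i
      have "inj_on f I"
      proof (rule inj_onI)
        fix x y assume xy: "x \<in> I" "y \<in> I" "f x = f y"
        show "x = y"
        proof (cases "x \<in> J"; cases "y \<in> J")
          assume "x \<in> J" "y \<in> J" then show ?thesis using xy f1(1) f_def by (auto dest: inj_onD)
        next
          assume "x \<notin> J" "y \<notin> J" then show ?thesis using xy f2(1) f_def by (auto dest: inj_onD)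
        next
          assume a: "x \<in> J" "y \<notin> J"
          then have "f x \<in> U" using f1 f_def U_def by auto
          moreover have "f2 y \<notin> U" using a xy(2) f2(2) S'_def by auto
          then have "f y \<notin> U" using a f_def by simp
          ultimately show ?thesis using xy by simp
        next
          assume a: "x \<notin> J" "y \<in> J"
          then have "f y \<in> U" using f1 f_def U_def by auto
          moreover have "f2 x \<notin> U" using a xy(1) f2(2) S'_def by auto
          then have "f x \<notin> U" using a f_def by simp
          ultimately show ?thesis using xy by simp
        qed
      qed
      moreover have "\<forall>i\<in>I. f i \<in> S i" using f1 f2 f_def S'_def by auto
      ultimately show ?thesis by blast
    next
      case False
      then have strict: "\<And>J. J \<subseteq> I \<Longrightarrow> J \<noteq> {} \<Longrightarrow> J \<noteq> I \<Longrightarrow> card J < card (\<Union>(S ` J))"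
        using H by (metis le_neq_implies_less)
      obtain i0 where i0: "i0 \<in> I" using \<open>I \<noteq> {}\<close> by blast
      have "card {i0} \<le> card (S i0)" 
      proof -
        have "{i0} \<subseteq> I" using i0 by simp
        then have "card {i0} \<le> card (\<Union>(S ` {i0}))" using H by blast
        then show ?thesis by simp
      qed
      then have "S i0 \<noteq> {}" by auto
      then obtain x where x: "x \<in> S i0" by blast
      define S' where "S' i = S i - {x}" for i
      have lt: "card (I - {i0}) < card I" using i0 fin
        by (metis card_Diff1_less)
      have H2: "\<forall>K\<subseteq>I - {i0}. card K \<le> card (\<Union>(S' ` K))"
      proof (intro allI impI)
        fix K assume K: "K \<subseteq> I - {i0}"
        show "card K \<le> card (\<Union>(S' ` K))"
        proof (cases "K = {}")
          case True then show ?thesis by simp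
        next
          case False
          have "K \<noteq> I" using K i0 by auto
          then have c: "card K < card (\<Union>(S ` K))" using strict K False by auto
          have finK: "finite K" using K fin finite_subset by blast
          have finU: "finite (\<Union>(S ` K))" using finK finS K by blast
          have "\<Union>(S' ` K) = \<Union>(S ` K) - {x}" unfolding S'_def by auto
          then have "card (\<Union>(S' ` K)) \<ge> card (\<Union>(S ` K)) - 1"
            using finU by (metis card_Diff_singleton_if diff_le_self le_refl)
          then show ?thesis using c by linarith
        qed
      qed
      obtain f2 where f2: "inj_on f2 (I - {i0})" "\<forall>i\<in>I - {i0}. f2 i \<in> S' i"
        using less.hyps[OF lt, of S'] fin finS H2 unfolding S'_def by auto
      define f where "f = f2(i0 := x)"
      have "inj_on f I"
      proof (rule inj_onI)
        fix a b assume ab: "a \<in> I" "b \<in> I" "f a = f b"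
        show "a = b"
        proof (cases "a = i0"; cases "b = i0")
          assume "a \<noteq> i0" "b \<noteq> i0" then show ?thesis using ab f2 f_def by (auto dest: inj_onD)
        next
          assume "a = i0" "b \<noteq> i0" then show ?thesis using ab f2 f_def S'_def by auto
        next
          assume "a \<noteq> i0" "b = i0" then show ?thesis using ab f2 f_def S'_def by auto
        qed simp
      qed
      moreover have "\<forall>i\<in>I. f i \<in> S i" using f2 f_def S'_def x by auto
      ultimately show ?thesis by blast
    qed
  qed
qed



definition ptr :: "nat \<Rightarrow> (nat \<Rightarrow> nat \<Rightarrow> 'a) \<Rightarrow> (nat \<times> nat) set \<Rightarrow> bool" where
  "ptr n A P \<longleftrightarrow> P \<subseteq> {..<n} \<times> {..<n} \<and> inj_on fst P \<and> inj_on snd P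
     \<and> inj_on (\<lambda>c. A (fst c) (snd c)) P"

lemma latin_row: "latin n A \<Longrightarrow> i < n \<Longrightarrow> inj_on (A i) {..<n}"
  unfolding latin_def inj_on_def by auto

lemma latin_col: "latin n A \<Longrightarrow> j < n \<Longrightarrow> inj_on (\<lambda>i. A i j) {..<n}"
  unfolding latin_def inj_on_def by (meson lessThan_iff)

lemma ptr_finite: "ptr n A P \<Longrightarrow> finite P"
  unfolding ptr_def by (meson finite_SigmaI finite_lessThan finite_subset)

lemma exists_avoid:
  assumes "finite B" "card B < n" shows "\<exists>y<n. y \<notin> B"
proof (rule ccontr)
  assume "\<not> ?thesis"
  then have "{..<n} \<subseteq> B" by auto
  then have "n \<le> card B" using assms(1) by (metis card_lessThan card_mono)
  then show False using assms(2) by simp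
qed

lemma greedy:
  assumes lat: "latin n A"
  shows "R \<subseteq> {..<n} \<Longrightarrow> C \<subseteq> {..<n} \<Longrightarrow> 2 * (card R + card C) \<le> n + 1 \<Longrightarrow>
    \<exists>P. ptr n A P \<and> card P \<le> card R + card C \<and> R \<subseteq> fst ` P \<and> C \<subseteq> snd ` P"
proof (induction "card R + card C" arbitrary: R C rule: less_induct)
  case less
  define val where "val = (\<lambda>c::nat\<times>nat. A (fst c) (snd c))"
  have finR: "finite R" and finC: "finite C" using less.prems finite_subset by blast+
  show ?case
  proof (cases "R = {}")
    case False
    then obtain x where x: "x \<in> R" by blast
    have lt: "card (R - {x}) + card C < card R + card C"
      using card_Diff1_less[OF finR x] by simp
    obtain P' where P': "ptr n A P'" "card P' \<le> card (R - {x}) + card C"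
        "R - {x} \<subseteq> fst ` P'" "C \<subseteq> snd ` P'"
    proof -
      have "R - {x} \<subseteq> {..<n}" using less.prems(1) by blast
      moreover have "2 * (card (R - {x}) + card C) \<le> n + 1" using lt less.prems(3) by (simp add: algebra_simps)
      ultimately show ?thesis using less.hyps[OF lt _ less.prems(2)] that by blast
    qed
    have cRx: "card (R - {x}) = card R - 1" using x finR by simp
    have cR: "card R \<ge> 1" using x finR by (metis One_nat_def Suc_leI card_gt_0_iff empty_iff)
    show ?thesis
    proof (cases "x \<in> fst ` P'")
      case True
      then show ?thesis using P' cRx by (intro exI[of _ P']) auto
    next
      case False
      have finP: "finite P'" using P'(1) ptr_finite by blast
      define B where "B = snd ` P' \<union> {y\<in>{..<n}. A x y \<in> val ` P'}"
      have xn: "x < n" using x less.prems by auto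
      have c1: "card (snd ` P') \<le> card P'" using card_image_le finP by blast
      have "card {y\<in>{..<n}. A x y \<in> val ` P'} \<le> card (val ` P')"
      proof (rule card_inj_on_le)
        show "inj_on (A x) {y \<in> {..<n}. A x y \<in> val ` P'}"
          using latin_row[OF lat xn] by (rule inj_on_subset) auto
      qed (use finP in auto)
      then have c2: "card {y\<in>{..<n}. A x y \<in> val ` P'} \<le> card P'"
        using card_image_le finP by (metis le_trans)
      have "card B \<le> card (snd ` P') + card {y\<in>{..<n}. A x y \<in> val ` P'}"
        unfolding B_def by (rule card_Un_le)
      moreover have "card P' + 1 \<le> card R + card C" using P'(2) cRx cR by linarith
      moreover have "2 * card R + 2 * card C \<le> n + 1" using less.prems(3) by simp
      ultimately have "card B < n" using c1 c2 by linarith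
      moreover have "finite B" unfolding B_def using finP by auto
      ultimately obtain y where y: "y < n" "y \<notin> B" using exists_avoid by blast
      define P where "P = insert (x, y) P'"
      have "ptr n A P"
        using P'(1) y xn False unfolding ptr_def P_def B_def val_def
        by (auto simp: inj_on_insert)
      moreover have "card P \<le> card R + card C"
      proof -
        have "card P \<le> Suc (card P')" unfolding P_def using finP by (simp add: card_insert_if)
        then show ?thesis using P'(2) cRx cR by linarith
      qed
      moreover have "R \<subseteq> fst ` P" using P'(3) unfolding P_def by auto
      moreover have "C \<subseteq> snd ` P" using P'(4) unfolding P_def by auto
      ultimately show ?thesis by blast
    qed
  next
    case Rempty: True
    show ?thesis
    proof (cases "C = {}")
      case True
      then show ?thesis using Rempty by (intro exI[of _ "{}"]) (auto simp: ptr_def)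
    next
      case False
      then obtain y where y: "y \<in> C" by blast
      have lt: "card R + card (C - {y}) < card R + card C"
        using card_Diff1_less[OF finC y] by simp
      obtain P' where P': "ptr n A P'" "card P' \<le> card R + card (C - {y})"
          "R \<subseteq> fst ` P'" "C - {y} \<subseteq> snd ` P'"
      proof -
        have "C - {y} \<subseteq> {..<n}" using less.prems(2) by blast
        moreover have "2 * (card R + card (C - {y})) \<le> n + 1" using lt less.prems(3) by (simp add: algebra_simps)
        ultimately show ?thesis using less.hyps[OF lt less.prems(1)] that by blast
      qed
      have cCy: "card (C - {y}) = card C - 1" using y finC by simp
      have cC: "card C \<ge> 1" using y finC by (metis One_nat_def Suc_leI card_gt_0_iff empty_iff)
      show ?thesis
      proof (cases "y \<in> snd ` P'")
        case True
        then show ?thesis using P' cCy by (intro exI[of _ P']) auto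
      next
        case False
        have finP: "finite P'" using P'(1) ptr_finite by blast
        define B where "B = fst ` P' \<union> {x\<in>{..<n}. A x y \<in> val ` P'}"
        have yn: "y < n" using y less.prems by auto
        have c1: "card (fst ` P') \<le> card P'" using card_image_le finP by blast
        have "card {x\<in>{..<n}. A x y \<in> val ` P'} \<le> card (val ` P')"
        proof (rule card_inj_on_le)
          show "inj_on (\<lambda>x. A x y) {x \<in> {..<n}. A x y \<in> val ` P'}"
            using latin_col[OF lat yn] by (rule inj_on_subset) auto
        qed (use finP in auto)
        then have c2: "card {x\<in>{..<n}. A x y \<in> val ` P'} \<le> card P'"
          using card_image_le finP by (metis le_trans)
        have "card B \<le> card (fst ` P') + card {x\<in>{..<n}. A x y \<in> val ` P'}"
          unfolding B_def by (rule card_Un_le)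
        moreover have "card P' + 1 \<le> card R + card C" using P'(2) cCy cC by linarith
        moreover have "2 * card R + 2 * card C \<le> n + 1" using less.prems(3) by simp
        ultimately have "card B < n" using c1 c2 by linarith
        moreover have "finite B" unfolding B_def using finP by auto
        ultimately obtain x where x: "x < n" "x \<notin> B" using exists_avoid by blast
        define P where "P = insert (x, y) P'"
        have "ptr n A P"
          using P'(1) x yn False unfolding ptr_def P_def B_def val_def
          by (auto simp: inj_on_insert)
        moreover have "card P \<le> card R + card C"
        proof -
          have "card P \<le> Suc (card P')" unfolding P_def using finP by (simp add: card_insert_if)
          then show ?thesis using P'(2) cCy cC by linarith
        qed
        moreover have "R \<subseteq> fst ` P" using P'(3) unfolding P_def by auto
        moreover have "C \<subseteq> snd ` P" using P'(4) unfolding P_def by auto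
        ultimately show ?thesis by blast
      qed
    qed
  qed
qed



lemma arith2:
  fixes n d p e :: nat
  assumes "8*d \<le> n" "p*(n+1-d) \<le> 4*e" "256*e + 27*n \<le> 27*(n*n)"
  shows "2*p \<le> n+1"
proof (rule ccontr)
  assume "\<not> ?thesis"
  then have p: "n + 2 \<le> 2*p" by simp
  define m where "m = n + 1 - d"
  have m: "7*n + 8 \<le> 8*m" using assms(1) m_def by simp
  have "(n+2)*m \<le> (2*p)*m" using p by (rule mult_right_mono) simp
  also have "\<dots> \<le> 8*e" using assms(2) m_def by simp
  finally have a: "(n+2)*m \<le> 8*e" .
  have "(n+2)*(7*n+8) \<le> (n+2)*(8*m)" using m by (rule mult_left_mono) simp
  then have "(n+2)*(7*n+8) \<le> 64*e" using a by linarith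
  then have "4*((n+2)*(7*n+8)) \<le> 27*(n*n)" using assms(3) by linarith
  then show False by (simp add: algebra_simps)
qed

lemma arith3:
  fixes n d a b e :: nat
  assumes "d+1 \<le> a" "d + a \<le> n" "n+1 \<le> a + b" "a*b \<le> e" "8*d \<le> n" "n < 8*d+8"
    "256*e + 27*n \<le> 27*(n*n)"
  shows False
proof -
  obtain x where x: "a = d+1+x" using assms(1) by (metis le_iff_add)
  obtain y where y: "n = a + d + y" using assms(2) le_Suc_ex by (metis add.commute le_iff_add)
  have "(d+1)*(n-d) \<le> a*(n+1-a)" using x y by (simp add: algebra_simps)
  also have "\<dots> \<le> a*b" using assms(3) by (intro mult_left_mono) auto
  finally have c: "(d+1)*(n-d) \<le> e" using assms(4) by linarith
  have "(n+1)*(7*n) \<le> (8*(d+1))*(8*(n-d))"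
  proof -
    have h1: "n+1 \<le> 8*(d+1)" using assms(6) by simp
    have h2: "7*n \<le> 8*(n-d)" using assms(5) by simp
    show ?thesis using mult_mono[OF h1 h2] by simp
  qed
  then have "(n+1)*(7*n) \<le> 64*e" using c by (simp add: algebra_simps)
  then have "4*((n+1)*(7*n)) + 27*n \<le> 27*(n*n)" using assms(7) by linarith
  then have "n = 0" by (simp add: algebra_simps)
  then show False using assms(1,2) by simp
qed

theorem mainTheorem2:
  fixes n :: nat and A :: "nat \<Rightarrow> nat \<Rightarrow> 'a"
  assumes "latin n A"
    and "real (card (symbols n A)) \<ge> (229 * real n ^ 2 + 27 * real n) / 256"
  shows "\<exists>T. is_transversal n A T"
proof -
  note lat = assms(1)
  define cells where "cells = {..<n} \<times> {..<n}"
  define val where "val = (\<lambda>c::nat\<times>nat. A (fst c) (snd c))"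
  define Sym where "Sym = val ` cells"
  have finC: "finite cells" unfolding cells_def by simp
  have cardC: "card cells = n*n" unfolding cells_def by (simp add: card_cartesian_product)
  have SymEq: "symbols n A = Sym"
  proof (rule set_eqI, rule iffI)
    fix u assume "u \<in> symbols n A"
    then obtain i j where ij: "u = A i j" "i<n" "j<n" unfolding symbols_def by blast
    then show "u \<in> Sym" unfolding Sym_def cells_def val_def by (intro image_eqI[of _ _ "(i,j)"]) auto
  next
    fix u assume "u \<in> Sym"
    then obtain c where c: "c \<in> cells" "u = val c" unfolding Sym_def by blast
    then show "u \<in> symbols n A" unfolding symbols_def cells_def val_def by (cases c) auto
  qed
  have cS: "card Sym \<le> n*n" unfolding Sym_def using cardC finC card_image_le by metis
  define e where "e = n*n - card Sym"
  have eS: "card Sym + e = n*n" using cS e_def by simp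
  have "real (229*(n*n) + 27*n) \<le> real (256 * card Sym)"
    using assms(2) SymEq by (simp add: power2_eq_square field_simps)
  then have h0: "229*(n*n) + 27*n \<le> 256 * card Sym" by (simp only: of_nat_le_iff)
  have hyp: "256*e + 27*n \<le> 27*(n*n)" using h0 eS by linarith
  define sing where "sing = {c\<in>cells. \<forall>c'\<in>cells. val c' = val c \<longrightarrow> c' = c}"
  define ns where "ns = cells - sing"
  have singC: "sing \<subseteq> cells" unfolding sing_def by auto
  have finS: "finite sing" "finite ns" using finC singC unfolding ns_def by (auto intro: finite_subset)
  have sn: "card sing + card ns = n*n"
    unfolding ns_def using singC finC cardC by (metis card_Diff_subset card_mono le_add_diff_inverse finite_subset)
  have Ncount: "card ns \<le> 2*e"
  proof -
    define F where "F u = {c\<in>ns. val c = u}" for u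
    have U: "ns = \<Union>(F ` (val ` ns))" unfolding F_def by auto
    have "card ns = (\<Sum>u\<in>val ` ns. card (F u))"
      by (subst U, rule card_UN_disjoint) (use finS in \<open>auto simp: F_def\<close>)
    moreover have "\<And>u. u \<in> val ` ns \<Longrightarrow> 2 \<le> card (F u)"
    proof -
      fix u assume "u \<in> val ` ns"
      then obtain c where c: "c \<in> ns" "val c = u" by blast
      then have "c \<in> cells" "c \<notin> sing" unfolding ns_def by auto
      then obtain c' where c': "c' \<in> cells" "val c' = val c" "c' \<noteq> c" unfolding sing_def by auto
      have "c' \<notin> sing" using c' \<open>c \<in> cells\<close> unfolding sing_def by auto
      then have "c' \<in> F u" using c' c unfolding F_def ns_def by auto
      moreover have "c \<in> F u" using c unfolding F_def by auto
      moreover have "finite (F u)" using finS unfolding F_def by auto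
      ultimately have "card {c, c'} \<le> card (F u)" by (intro card_mono) auto
      then show "2 \<le> card (F u)" using c' by simp
    qed
    ultimately have "card (val ` ns) * 2 \<le> card ns"
      using sum_bounded_below[of "val ` ns" 2 "\<lambda>u. card (F u)"] by simp
    moreover have "Sym = val ` sing \<union> val ` ns" unfolding Sym_def ns_def using singC by auto
    then have "card Sym \<le> card (val ` sing) + card (val ` ns)" by (metis card_Un_le)
    moreover have "card (val ` sing) \<le> card sing" using finS card_image_le by blast
    ultimately show ?thesis using sn eS by linarith
  qed
  define d where "d = n div 8"
  have d8: "8*d \<le> n" "n < 8*d+8" unfolding d_def by auto
  define rowS where "rowS i = {j\<in>{..<n}. (i,j) \<in> sing}" for i
  define colS where "colS j = {i\<in>{..<n}. (i,j) \<in> sing}" for j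
  define PR where "PR = {i\<in>{..<n}. card (rowS i) < d}"
  define PC where "PC = {j\<in>{..<n}. card (colS j) < d}"
  have PRc: "card PR * (n + 1 - d) \<le> card ns"
  proof -
    define rowN where "rowN i = {j\<in>{..<n}. (i,j) \<in> ns}" for i
    have "\<And>i. i \<in> PR \<Longrightarrow> n + 1 - d \<le> card (rowN i)"
    proof -
      fix i assume i: "i \<in> PR"
      have "{..<n} = rowS i \<union> rowN i" "rowS i \<inter> rowN i = {}"
        unfolding rowS_def rowN_def ns_def using i unfolding PR_def cells_def by auto
      then have "card (rowS i) + card (rowN i) = n"
        by (metis card_Un_disjoint card_lessThan finite_Un finite_lessThan)
      then show "n + 1 - d \<le> card (rowN i)" using i unfolding PR_def by auto
    qed
    then have "card PR * (n+1-d) \<le> (\<Sum>i\<in>PR. card (rowN i))"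
      using sum_bounded_below[of PR "n+1-d" "\<lambda>i. card (rowN i)"] by simp
    also have "\<dots> = card (SIGMA i:PR. rowN i)"
      by (rule card_SigmaI[symmetric]) (auto simp: PR_def rowN_def)
    also have "\<dots> \<le> card ns"
      by (rule card_mono) (use finS in \<open>auto simp: rowN_def\<close>)
    finally show ?thesis .
  qed
  have PCc: "card PC * (n + 1 - d) \<le> card ns"
  proof -
    define colN where "colN j = {i\<in>{..<n}. (i,j) \<in> ns}" for j
    have "\<And>j. j \<in> PC \<Longrightarrow> n + 1 - d \<le> card (colN j)"
    proof -
      fix j assume j: "j \<in> PC"
      have "{..<n} = colS j \<union> colN j" "colS j \<inter> colN j = {}"
        unfolding colS_def colN_def ns_def using j unfolding PC_def cells_def by auto
      then have "card (colS j) + card (colN j) = n"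
        by (metis card_Un_disjoint card_lessThan finite_Un finite_lessThan)
      then show "n + 1 - d \<le> card (colN j)" using j unfolding PC_def by auto
    qed
    then have "card PC * (n+1-d) \<le> (\<Sum>j\<in>PC. card (colN j))"
      using sum_bounded_below[of PC "n+1-d" "\<lambda>j. card (colN j)"] by simp
    also have "\<dots> = card (SIGMA j:PC. colN j)"
      by (rule card_SigmaI[symmetric]) (auto simp: PC_def colN_def)
    also have "\<dots> = card ((\<lambda>(j,i). (i,j)) ` (SIGMA j:PC. colN j))"
      by (rule card_image[symmetric]) (auto simp: inj_on_def)
    also have "\<dots> \<le> card ns"
      by (rule card_mono) (use finS in \<open>auto simp: colN_def\<close>)
    finally show ?thesis .
  qed
  have "(card PR + card PC) * (n+1-d) \<le> 4*e" using PRc PCc Ncount by (simp add: algebra_simps)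
  then have pbound: "2*(card PR + card PC) \<le> n+1" using arith2[OF d8(1) _ hyp] by blast
  obtain P where P: "ptr n A P" "PR \<subseteq> fst ` P" "PC \<subseteq> snd ` P"
    using greedy[OF lat _ _ pbound] unfolding PR_def PC_def by blast
  have PC': "P \<subseteq> cells" "inj_on fst P" "inj_on snd P" "inj_on val P"
    using P(1) unfolding ptr_def cells_def val_def by auto
  define rep where "rep u = (SOME c. c \<in> cells \<and> val c = u \<and> (u \<in> val ` P \<longrightarrow> c \<in> P))" for u
  have rep: "rep u \<in> cells \<and> val (rep u) = u \<and> (u \<in> val ` P \<longrightarrow> rep u \<in> P)" if u: "u \<in> Sym" for u
  proof -
    have "\<exists>c. c \<in> cells \<and> val c = u \<and> (u \<in> val ` P \<longrightarrow> c \<in> P)"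
    proof (cases "u \<in> val ` P")
      case True then show ?thesis using PC'(1) by blast
    next
      case False then show ?thesis using u unfolding Sym_def by blast
    qed
    then show ?thesis unfolding rep_def by (rule someI_ex)
  qed
  define kept where "kept = rep ` Sym"
  have keptC: "kept \<subseteq> cells" using rep unfolding kept_def by auto
  have keptV: "c = c'" if cc: "c \<in> kept" "c' \<in> kept" "val c = val c'" for c c'
  proof -
    obtain u u' where uu: "u \<in> Sym" "u' \<in> Sym" "c = rep u" "c' = rep u'"
      using cc unfolding kept_def by blast
    then have "u = u'" using rep cc(3) by metis
    then show "c = c'" using uu by simp
  qed
  have cardK: "card kept = card Sym"
    unfolding kept_def by (rule card_image) (metis inj_onI rep)
  have blank: "card (cells - kept) = e"
    using keptC finC cardC cardK e_def by (simp add: card_Diff_subset finite_subset)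
  have Pkept: "P \<subseteq> kept"
  proof
    fix c assume c: "c \<in> P"
    have u: "val c \<in> Sym" using c PC'(1) unfolding Sym_def by auto
    then have "rep (val c) \<in> P" "val (rep (val c)) = val c" using rep c by auto
    then have "rep (val c) = c" using PC'(4) c by (auto dest: inj_onD)
    then show "c \<in> kept" using u unfolding kept_def by force
  qed
  have singK: "sing \<subseteq> kept"
  proof
    fix c assume c: "c \<in> sing"
    have u: "val c \<in> Sym" using c singC unfolding Sym_def by auto
    then have "rep (val c) = c" using rep c unfolding sing_def by auto
    then show "c \<in> kept" using u unfolding kept_def by force
  qed
  define S where "S i = {j\<in>{..<n}. (i,j) \<in> kept}" for i
  have HallC: "\<forall>X\<subseteq>{..<n}. card X \<le> card (\<Union>(S ` X))"
  proof (intro allI impI)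
    fix X assume X: "X \<subseteq> {..<n}"
    show "card X \<le> card (\<Union>(S ` X))"
    proof (rule ccontr)
      assume lt: "\<not> ?thesis"
      define NX where "NX = \<Union>(S ` X)"
      define Y where "Y = {..<n} - NX"
      have NXs: "NX \<subseteq> {..<n}" unfolding NX_def S_def by auto
      have finX: "finite X" using X finite_subset by blast
      have finNX: "finite NX" using NXs finite_subset by blast
      have cY: "card Y = n - card NX" unfolding Y_def using NXs by (simp add: card_Diff_subset finite_subset)
      have cNX: "card NX \<le> n" using NXs by (metis card_lessThan card_mono finite_lessThan)
      have cX: "card X \<le> n" using X by (metis card_lessThan card_mono finite_lessThan)
      have ab: "n + 1 \<le> card X + card Y" using lt cY cNX unfolding NX_def by linarith
      have XY: "X \<times> Y \<subseteq> cells - kept"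
        using X unfolding Y_def NX_def S_def cells_def by auto
      have abe: "card X * card Y \<le> e"
        using card_mono[OF _ XY] blank finC by (simp add: card_cartesian_product)
      have a1: "d + 1 \<le> card X"
      proof (cases "X \<subseteq> PR")
        case True
        define g where "g x = snd (SOME c. c \<in> P \<and> fst c = x)" for x
        have g: "(x, g x) \<in> P" if "x \<in> X" for x
        proof -
          have "\<exists>c. c \<in> P \<and> fst c = x" using that True P(2) by force
          then have "(SOME c. c \<in> P \<and> fst c = x) \<in> P \<and> fst (SOME c. c \<in> P \<and> fst c = x) = x"
            by (rule someI_ex)
          then show ?thesis unfolding g_def by (metis prod.collapse)
        qed
        have "inj_on g X"
        proof (rule inj_onI)
          fix x x' assume "x \<in> X" "x' \<in> X" "g x = g x'"
          then have "(x, g x) = (x', g x')" using g PC'(3) by (metis inj_onD snd_conv)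
          then show "x = x'" by simp
        qed
        moreover have "g ` X \<subseteq> NX"
          using g Pkept X keptC unfolding NX_def S_def cells_def by fastforce
        ultimately have "card X \<le> card NX" using finNX by (metis card_inj_on_le)
        then show ?thesis using lt unfolding NX_def by simp
      next
        case False
        then obtain x where x: "x \<in> X" "x \<notin> PR" by blast
        then have "d \<le> card (rowS x)" using X unfolding PR_def by auto
        moreover have "rowS x \<subseteq> NX" using x singK unfolding rowS_def NX_def S_def by auto
        then have "card (rowS x) \<le> card NX" using finNX by (rule card_mono[rotated])
        ultimately show ?thesis using lt unfolding NX_def by linarith
      qed
      have a2: "d + card X \<le> n"
      proof (cases "Y \<subseteq> PC")
        case True
        define h where "h y = fst (SOME c. c \<in> P \<and> snd c = y)" for y
        have h: "(h y, y) \<in> P" if "y \<in> Y" for y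
        proof -
          have "\<exists>c. c \<in> P \<and> snd c = y" using that True P(3) by force
          then have "(SOME c. c \<in> P \<and> snd c = y) \<in> P \<and> snd (SOME c. c \<in> P \<and> snd c = y) = y"
            by (rule someI_ex)
          then show ?thesis unfolding h_def by (metis prod.collapse)
        qed
        have "inj_on h Y"
        proof (rule inj_onI)
          fix y y' assume "y \<in> Y" "y' \<in> Y" "h y = h y'"
          then have "(h y, y) = (h y', y')" using h PC'(2) by (metis inj_onD fst_conv)
          then show "y = y'" by simp
        qed
        moreover have "h ` Y \<subseteq> {..<n} - X"
        proof
          fix i assume "i \<in> h ` Y"
          then obtain y where y: "y \<in> Y" "i = h y" by blast
          have "(i, y) \<in> kept" using h[OF y(1)] y(2) Pkept by auto
          then have "i < n" using keptC unfolding cells_def by auto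
          moreover have "i \<notin> X" using XY y(1) \<open>(i,y) \<in> kept\<close> by auto
          ultimately show "i \<in> {..<n} - X" by simp
        qed
        ultimately have "card Y \<le> card ({..<n} - X)" by (metis card_inj_on_le finite_Diff finite_lessThan)
        then have "card Y \<le> n - card X" using X by (simp add: card_Diff_subset finX)
        then show ?thesis using ab cX by linarith
      next
        case False
        then obtain y where y: "y \<in> Y" "y \<notin> PC" by blast
        then have "d \<le> card (colS y)" unfolding PC_def Y_def by auto
        moreover have "colS y \<subseteq> {..<n} - X" using y XY singK unfolding colS_def by auto
        then have "card (colS y) \<le> card ({..<n} - X)" by (rule card_mono[rotated]) simp
        moreover have "card ({..<n} - X) = n - card X" using X by (simp add: card_Diff_subset finX)
        ultimately show ?thesis using cX by linarith
      qed
      show False using arith3[OF a1 a2 ab abe d8 hyp] .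
    qed
  qed
  obtain f where f: "inj_on f {..<n}" "\<forall>i\<in>{..<n}. f i \<in> S i"
    using hall[of "{..<n}" S] HallC unfolding S_def by auto
  define T where "T = (\<lambda>i. (i, f i, A i (f i))) ` {..<n}"
  have fk: "\<And>i. i < n \<Longrightarrow> (i, f i) \<in> kept \<and> f i < n" using f(2) unfolding S_def by auto
  have "T \<subseteq> entries n A" unfolding T_def entries_def using fk by auto
  moreover have "card T = n" unfolding T_def by (subst card_image) (auto simp: inj_on_def)
  moreover have "\<forall>x\<in>T. \<forall>y\<in>T. x \<noteq> y \<longrightarrow>
        fst x \<noteq> fst y \<and> fst (snd x) \<noteq> fst (snd y) \<and> snd (snd x) \<noteq> snd (snd y)"
  proof (intro ballI impI)
    fix x y assume xy: "x \<in> T" "y \<in> T" "x \<noteq> y"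
    then obtain i j where ij: "i < n" "j < n" "x = (i, f i, A i (f i))" "y = (j, f j, A j (f j))"
      unfolding T_def by auto
    then have "i \<noteq> j" using xy by auto
    moreover have "f i \<noteq> f j" using f(1) ij \<open>i \<noteq> j\<close> by (auto dest: inj_onD)
    moreover have "A i (f i) \<noteq> A j (f j)"
    proof
      assume "A i (f i) = A j (f j)"
      then have "(i, f i) = (j, f j)" using keptV fk ij unfolding val_def by (metis fst_conv snd_conv)
      then show False using \<open>i \<noteq> j\<close> by simp
    qed
    ultimately show "fst x \<noteq> fst y \<and> fst (snd x) \<noteq> fst (snd y) \<and> snd (snd x) \<noteq> snd (snd y)"
      using ij by simp
  qed
  ultimately show ?thesis unfolding is_transversal_def by blast
qed


end
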